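(* Let $\mathfrak{g}$ be a $(2p+1)$-dimensional filiform Lie algebra over $\mathbb{K}$ and $\{X_0,\dots,X_{2p}\}$ a Vergne basis of $\mathfrak{g}$, with structure constants $[X_i,X_j]=\sum_k C_{i,j}^kX_k$, and set $a_{i,j}=C_{i,j}^{2p}$. Then $\mathfrak{g}$ admits a contact form if and only if $\prod_{i=1}^{p-1}a_{i,2p-1-i}=a_{1,2p-2}\,a_{2,2p-3}\cdots a_{p-1,p}\neq 0.$
   Context: $\mathbb{K}$ is algebraically closed of characteristic $0$. An $(n+1)$-dimensional Lie algebra is filiform if it is nilpotent of nilindex $n$. A Vergne basis of an $(n+1)$-dimensional filiform Lie algebra is a basis $\{X_0,\dots,X_n\}$ with $[X_0,X_i]=X_{i+1}$ for $1\le i\le n-1$, $[X_0,X_n]=0$, $[X_1,X_{n-1}]=0$, and $[X_i,X_j]\in\mathrm{span}\{X_k: k\ge i+j\}$ for $1\le i<j$; every filiform Lie algebra has such a basis. A contact form on a $(2p+1)$-dimensional Lie algebra is a linear form $\omega$ with $\omega\wedge(d\omega)^p\neq 0$, where $d\omega(X,Y)=-\omega([X,Y])$. *)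

theory Defs
  imports "HOL-Computational_Algebra.Polynomial" "HOL-Combinatorics.Permutations"
begin

text \<open>A Lie algebra of dimension n+1 with a fixed basis X_0..X_n is encoded by its
structure constants C i j k, meaning [X_i, X_j] = sum_k C i j k X_k (indices 0..n).\<close>

definition lie_sc :: "nat \<Rightarrow> (nat \<Rightarrow> nat \<Rightarrow> nat \<Rightarrow> 'k::field) \<Rightarrow> bool" where
  "lie_sc n C \<longleftrightarrow>
     (\<forall>i\<le>n. \<forall>j\<le>n. \<forall>k\<le>n. C i j k = - C j i k) \<and>
     (\<forall>i\<le>n. \<forall>j\<le>n. \<forall>l\<le>n. \<forall>m\<le>n.
        (\<Sum>k\<le>n. C i j k * C k l m + C j l k * C k i m + C l i k * C k j m) = 0)"

definition elems :: "nat \<Rightarrow> (nat \<Rightarrow> 'k::zero) set" where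
  "elems n = {x. \<forall>k>n. x k = 0}"

definition br :: "nat \<Rightarrow> (nat \<Rightarrow> nat \<Rightarrow> nat \<Rightarrow> 'k::field) \<Rightarrow> (nat \<Rightarrow> 'k) \<Rightarrow> (nat \<Rightarrow> 'k) \<Rightarrow> (nat \<Rightarrow> 'k)" where
  "br n C x y = (\<lambda>k. if k \<le> n then (\<Sum>i\<le>n. \<Sum>j\<le>n. x i * y j * C i j k) else 0)"

fun iter_br :: "nat \<Rightarrow> (nat \<Rightarrow> nat \<Rightarrow> nat \<Rightarrow> 'k::field) \<Rightarrow> (nat \<Rightarrow> 'k) list \<Rightarrow> (nat \<Rightarrow> 'k) \<Rightarrow> (nat \<Rightarrow> 'k)" where
  "iter_br n C [] y = y"
| "iter_br n C (x # xs) y = br n C x (iter_br n C xs y)"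

text \<open>The m-th term C^m g of the lower central series (C^0 g = g, C^{m+1} g = [g, C^m g])
is spanned by the iterated brackets of length m; so it is zero iff they all vanish.\<close>
definition lcs_zero :: "nat \<Rightarrow> (nat \<Rightarrow> nat \<Rightarrow> nat \<Rightarrow> 'k::field) \<Rightarrow> nat \<Rightarrow> bool" where
  "lcs_zero n C m \<longleftrightarrow>
     (\<forall>xs y. length xs = m \<longrightarrow> set xs \<subseteq> elems n \<longrightarrow> y \<in> elems n \<longrightarrow> iter_br n C xs y = (\<lambda>_. 0))"

definition filiform :: "nat \<Rightarrow> (nat \<Rightarrow> nat \<Rightarrow> nat \<Rightarrow> 'k::field) \<Rightarrow> bool" where
  "filiform n C \<longleftrightarrow> lcs_zero n C n \<and> (\<forall>k<n. \<not> lcs_zero n C k)"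

definition vergne :: "nat \<Rightarrow> (nat \<Rightarrow> nat \<Rightarrow> nat \<Rightarrow> 'k::field) \<Rightarrow> bool" where
  "vergne n C \<longleftrightarrow>
     (\<forall>i. 1 \<le> i \<and> i \<le> n - 1 \<longrightarrow> (\<forall>k\<le>n. C 0 i k = (if k = i + 1 then 1 else 0))) \<and>
     (\<forall>k\<le>n. C 0 n k = 0) \<and>
     (\<forall>k\<le>n. C 1 (n - 1) k = 0) \<and>
     (\<forall>i j k. 1 \<le> i \<and> i < j \<and> j \<le> n \<and> k \<le> n \<and> k < i + j \<longrightarrow> C i j k = 0)"

text \<open>d omega (X_a, X_b) = - omega([X_a, X_b]); omega is given by its values omega k = omega(X_k).\<close>
definition d_form :: "nat \<Rightarrow> (nat \<Rightarrow> nat \<Rightarrow> nat \<Rightarrow> 'k::field) \<Rightarrow> (nat \<Rightarrow> 'k) \<Rightarrow> nat \<Rightarrow> nat \<Rightarrow> 'k" where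
  "d_form n C \<omega> a b = - (\<Sum>k\<le>n. C a b k * \<omega> k)"

text \<open>(omega \<wedge> (d omega)^p)(X_0,...,X_{2p}), up to a nonzero normalisation constant
(which depends on the wedge-product convention and is nonzero in characteristic 0).\<close>
definition contact_value :: "nat \<Rightarrow> (nat \<Rightarrow> nat \<Rightarrow> nat \<Rightarrow> 'k::field) \<Rightarrow> (nat \<Rightarrow> 'k) \<Rightarrow> 'k" where
  "contact_value p C \<omega> =
     (\<Sum>\<sigma> | \<sigma> permutes {0..2*p}.
        of_int (sign \<sigma>) * \<omega> (\<sigma> 0) *
        (\<Prod>i<p. d_form (2*p) C \<omega> (\<sigma> (2*i+1)) (\<sigma> (2*i+2))))"

definition is_contact_form :: "nat \<Rightarrow> (nat \<Rightarrow> nat \<Rightarrow> nat \<Rightarrow> 'k::field) \<Rightarrow> (nat \<Rightarrow> 'k) \<Rightarrow> bool" where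
  "is_contact_form p C \<omega> \<longleftrightarrow> contact_value p C \<omega> \<noteq> 0"

end

theory Submission
  imports Defs
begin

locale vf =
  fixes C :: "nat \<Rightarrow> nat \<Rightarrow> nat \<Rightarrow> 'k::field_char_0" and p :: nat
  assumes lie: "lie_sc (2*p) C" and ver: "vergne (2*p) C" and p1: "1 \<le> p"
begin

lemma anti: "i \<le> 2*p \<Longrightarrow> j \<le> 2*p \<Longrightarrow> k \<le> 2*p \<Longrightarrow> C i j k = - C j i k"
  using lie unfolding lie_sc_def by blast

lemma diag: "i \<le> 2*p \<Longrightarrow> k \<le> 2*p \<Longrightarrow> C i i k = 0"
proof -
  assume a: "i \<le> 2*p" "k \<le> 2*p"
  have "C i i k = - C i i k" using anti[OF a(1) a(1) a(2)] .
  then have "C i i k + C i i k = 0" by (metis add.left_inverse)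
  then show ?thesis by (simp add: mult_2[symmetric])
qed

lemma jac: "i\<le>2*p \<Longrightarrow> j\<le>2*p \<Longrightarrow> l\<le>2*p \<Longrightarrow> m\<le>2*p \<Longrightarrow>
  (\<Sum>k\<le>2*p. C i j k * C k l m + C j l k * C k i m + C l i k * C k j m) = 0"
  using lie unfolding lie_sc_def by blast

lemma c0: "1 \<le> i \<Longrightarrow> i \<le> 2*p-1 \<Longrightarrow> k \<le> 2*p \<Longrightarrow> C 0 i k = (if k = i+1 then 1 else 0)"
  using ver unfolding vergne_def by blast

lemma c0n: "k \<le> 2*p \<Longrightarrow> C 0 (2*p) k = 0"
  using ver unfolding vergne_def by blast

lemma c1top: "k \<le> 2*p \<Longrightarrow> C 1 (2*p-1) k = 0"
  using ver unfolding vergne_def by blast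

lemma low: "1 \<le> a \<Longrightarrow> 1 \<le> b \<Longrightarrow> a \<le> 2*p \<Longrightarrow> b \<le> 2*p \<Longrightarrow> k \<le> 2*p \<Longrightarrow> k < a+b \<Longrightarrow> C a b k = 0"
proof -
  assume h: "1 \<le> a" "1 \<le> b" "a \<le> 2*p" "b \<le> 2*p" "k \<le> 2*p" "k < a+b"
  have v: "\<And>i j k. 1 \<le> i \<and> i < j \<and> j \<le> 2*p \<and> k \<le> 2*p \<and> k < i + j \<Longrightarrow> C i j k = 0"
    using ver unfolding vergne_def by blast
  consider "a < b" | "a = b" | "b < a" by linarith
  then show ?thesis
  proof cases
    case 1 show ?thesis by (rule v) (use h 1 in auto)
  next
    case 2 then show ?thesis using diag h by simp
  next
    case 3 have "C b a k = 0" by (rule v) (use h 3 in auto)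
    then show ?thesis using anti[of a b k] h by simp
  qed
qed


lemma sum_single: "(m::nat) \<le> N \<Longrightarrow> (\<And>k. k \<le> N \<Longrightarrow> f k = (if k = m then f m else 0)) \<Longrightarrow> (\<Sum>k\<le>N. f k) = f m"
proof -
  assume a: "m \<le> N" "\<And>k. k \<le> N \<Longrightarrow> f k = (if k = m then f m else 0)"
  have "(\<Sum>k\<le>N. f k) = (\<Sum>k\<le>N. if k = m then f m else 0)"
    by (intro sum.cong refl) (metis a(2) atMost_iff)
  also have "\<dots> = f m" using a(1) by (subst sum.delta) auto
  finally show ?thesis .
qed

lemma R: "1 \<le> i \<Longrightarrow> 1 \<le> j \<Longrightarrow> i+j+1 \<le> 2*p \<Longrightarrow>
   C i (j+1) (i+j+1) + C (i+1) j (i+j+1) = C i j (i+j)"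
proof -
  assume h: "1 \<le> i" "1 \<le> j" "i+j+1 \<le> 2*p"
  define M where "M = i+j+1"
  have J: "(\<Sum>k\<le>2*p. C 0 i k * C k j M + C i j k * C k 0 M + C j 0 k * C k i M) = 0"
    using jac[of 0 i j M] h unfolding M_def by simp
  have s1: "(\<Sum>k\<le>2*p. C 0 i k * C k j M) = C 0 i (i+1) * C (i+1) j M"
    by (rule sum_single) (use h c0[of i] in auto)
  have s1': "C 0 i (i+1) = 1" using c0[of i "i+1"] h by simp
  have s2: "(\<Sum>k\<le>2*p. C i j k * C k 0 M) = C i j (i+j) * C (i+j) 0 M"
  proof (rule sum_single)
    show "i + j \<le> 2*p" using h by simp
    fix k assume k: "k \<le> 2*p"
    have "C k 0 M = - C 0 k M" using anti[of k 0 M] k h unfolding M_def by simp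
    moreover have "C 0 k M = (if k = i+j then 1 else 0)"
    proof (cases "k = 0 \<or> k = 2*p")
      case True
      then show ?thesis using diag[of 0 M] c0n[of M] h unfolding M_def by auto
    next
      case False
      then show ?thesis using c0[of k M] k h unfolding M_def by auto
    qed
    ultimately show "C i j k * C k 0 M = (if k = i + j then C i j (i + j) * C (i + j) 0 M else 0)"
      by auto
  qed
  have s3: "(\<Sum>k\<le>2*p. C j 0 k * C k i M) = - C (j+1) i M"
  proof -
    have "(\<Sum>k\<le>2*p. C j 0 k * C k i M) = C j 0 (j+1) * C (j+1) i M"
    proof (rule sum_single)
      show "j+1 \<le> 2*p" using h by simp
      fix k assume k: "k \<le> 2*p"
      have "C j 0 k = - C 0 j k" using anti[of j 0 k] k h by simp
      then show "C j 0 k * C k i M = (if k = j+1 then C j 0 (j+1) * C (j+1) i M else 0)"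
        using c0[of j k] h k by auto
    qed
    moreover have "C j 0 (j+1) = -1" using anti[of j 0 "j+1"] c0[of j "j+1"] h by simp
    ultimately show ?thesis by simp
  qed
  have "C (i+j) 0 M = -1" using anti[of "i+j" 0 M] c0[of "i+j" M] h unfolding M_def by simp
  moreover have "C (j+1) i M = - C i (j+1) M" using anti[of "j+1" i M] h unfolding M_def by simp
  ultimately have "C (i+1) j M - C i j (i+j) + C i (j+1) M = 0"
    using J s1 s1' s2 s3 by (simp add: sum.distrib)
  then show ?thesis unfolding M_def by (simp add: algebra_simps)
qed

lemma J1: "3 \<le> c \<Longrightarrow> c+3 \<le> 2*p \<Longrightarrow>
  C 2 c (c+2) * C (c+2) 1 (c+3) + C c 1 (c+1) * C (c+1) 2 (c+3) + C 1 2 3 * C 3 c (c+3) = 0"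
proof -
  assume h: "3 \<le> c" "c+3 \<le> 2*p"
  have J: "(\<Sum>k\<le>2*p. C 2 c k * C k 1 (c+3) + C c 1 k * C k 2 (c+3) + C 1 2 k * C k c (c+3)) = 0"
    using jac[of 2 c 1 "c+3"] h by simp
  have s1: "(\<Sum>k\<le>2*p. C 2 c k * C k 1 (c+3)) = C 2 c (c+2) * C (c+2) 1 (c+3)"
  proof (rule sum_single)
    show "c+2 \<le> 2*p" using h by simp
    fix k assume k: "k \<le> 2*p"
    show "C 2 c k * C k 1 (c+3) = (if k = c+2 then C 2 c (c+2) * C (c+2) 1 (c+3) else 0)"
      using low[of 2 c k] low[of k 1 "c+3"] h k by (cases "k < c+2") auto
  qed
  have s2: "(\<Sum>k\<le>2*p. C c 1 k * C k 2 (c+3)) = C c 1 (c+1) * C (c+1) 2 (c+3)"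
  proof (rule sum_single)
    show "c+1 \<le> 2*p" using h by simp
    fix k assume k: "k \<le> 2*p"
    show "C c 1 k * C k 2 (c+3) = (if k = c+1 then C c 1 (c+1) * C (c+1) 2 (c+3) else 0)"
      using low[of c 1 k] low[of k 2 "c+3"] h k by (cases "k < c+1") auto
  qed
  have s3: "(\<Sum>k\<le>2*p. C 1 2 k * C k c (c+3)) = C 1 2 3 * C 3 c (c+3)"
  proof (rule sum_single)
    show "3 \<le> 2*p" using h by simp
    fix k assume k: "k \<le> 2*p"
    show "C 1 2 k * C k c (c+3) = (if k = 3 then C 1 2 3 * C 3 c (c+3) else 0)"
      using low[of 1 2 k] low[of k c "c+3"] h k by (cases "k < 3") auto
  qed
  show ?thesis using J s1 s2 s3 by (simp add: sum.distrib)
qed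

lemma R1: "1 \<le> j \<Longrightarrow> j+2 \<le> 2*p \<Longrightarrow> C 1 (j+1) (j+2) + C 2 j (j+2) = C 1 j (j+1)"
proof -
  assume a: "1 \<le> j" "j+2 \<le> 2*p"
  have e: "1+j+1 = j+2" "(1::nat)+1 = 2" "j+1+1 = j+2" by simp_all
  have "C 1 (j+1) (1+j+1) + C (1+1) j (1+j+1) = C 1 j (1+j)" by (rule R) (use a in simp_all)
  then have "C 1 (j+1) (j+2) + C 2 j (j+2) = C 1 j (1+j)" by (simp only: e)
  then show ?thesis by simp
qed

definition lam where "lam = C 1 2 3"
definition hv :: "nat \<Rightarrow> nat \<Rightarrow> 'k" where "hv i j = (if i = 1 \<and> 2 \<le> j then lam else if j = 1 \<and> 2 \<le> i then - lam else 0)"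
definition HH where "HH m \<longleftrightarrow> (\<forall>i j. 1 \<le> i \<longrightarrow> 1 \<le> j \<longrightarrow> i + j \<le> m \<longrightarrow> C i j (i+j) = hv i j)"

lemma step:
  assumes H: "HH (2*q)" and q: "1 \<le> q" and b: "2*q+2 \<le> 2*p"
  shows "HH (2*q+2)"
proof -
  define m where "m = 2*q"
  have m2: "2 \<le> m" using q unfolding m_def by simp
  have Hm: "\<And>i j. 1 \<le> i \<Longrightarrow> 1 \<le> j \<Longrightarrow> i + j \<le> m \<Longrightarrow> C i j (i+j) = hv i j"
    using H unfolding HH_def m_def by blast
  have bm: "m + 2 \<le> 2*p" using b unfolding m_def by simp
  define \<mu> where "\<mu> = C 1 m (m+1) - lam"
  define \<nu> where "\<nu> = C 1 (m+1) (m+2) - lam"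
  have x: "\<And>k j. k+2+j = m+1 \<Longrightarrow> 2 \<le> j \<Longrightarrow> C (k+2) j (m+1) = (-1)^(k+1) * \<mu>"
  proof -
    fix k show "\<And>j. k+2+j = m+1 \<Longrightarrow> 2 \<le> j \<Longrightarrow> C (k+2) j (m+1) = (-1)^(k+1) * \<mu>"
    proof (induction k)
      case 0
      fix j assume a: "0+2+j = m+1" "2 \<le> j"
      from a have mj: "m = j+1" by simp
      have r: "C 1 (j+1) (j+2) + C 2 j (j+2) = C 1 j (j+1)" by (rule R1) (use a bm mj in simp_all)
      have h1: "C 1 j (j+1) = lam" using Hm[of 1 j] a mj by (simp add: hv_def)
      have "C 2 j (j+2) = lam - C 1 (j+1) (j+2)" using r h1 by (simp add: eq_diff_eq add.commute)
      then show "C (0+2) j (m+1) = (-1)^(0+1) * \<mu>" unfolding \<mu>_def mj by (simp add: numeral_2_eq_2)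
    next
      case (Suc k)
      fix j assume a: "Suc k+2+j = m+1" "2 \<le> j"
      have ih: "C (k+2) (j+1) (m+1) = (-1)^(k+1) * \<mu>" using Suc.IH[of "j+1"] a by simp
      have r: "C (k+2) (j+1) (k+2+j+1) + C (k+2+1) j (k+2+j+1) = C (k+2) j (k+2+j)"
        using R[of "k+2" j] a bm by simp
      have "C (k+2) j (k+2+j) = 0" using Hm[of "k+2" j] a by (simp add: hv_def)
      moreover have "k+2+j+1 = m+1" using a by simp
      ultimately have "C (k+3) j (m+1) = - C (k+2) (j+1) (m+1)" using r
        by (simp add: eq_neg_iff_add_eq_0 add.commute numeral_3_eq_3)
      then show "C (Suc k+2) j (m+1) = (-1)^(Suc k+1) * \<mu>" using ih by (simp add: numeral_3_eq_3)
    qed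
  qed
  have y: "\<And>k j. k+2+j = m+2 \<Longrightarrow> 2 \<le> j \<Longrightarrow> C (k+2) j (m+2) = (-1)^(k+1) * (\<nu> - of_nat (k+1) * \<mu>)"
  proof -
    fix k show "\<And>j. k+2+j = m+2 \<Longrightarrow> 2 \<le> j \<Longrightarrow> C (k+2) j (m+2) = (-1)^(k+1) * (\<nu> - of_nat (k+1) * \<mu>)"
    proof (induction k)
      case 0
      fix j assume a: "0+2+j = m+2" "2 \<le> j"
      from a have mj: "j = m" by simp
      have r: "C 1 (m+1) (m+2) + C 2 m (m+2) = C 1 m (m+1)" by (rule R1) (use bm m2 in simp_all)
      have "C 2 m (m+2) = C 1 m (m+1) - C 1 (m+1) (m+2)" using r by (simp add: eq_diff_eq add.commute)
      then show "C (0+2) j (m+2) = (-1)^(0+1) * (\<nu> - of_nat (0+1) * \<mu>)"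
        unfolding \<mu>_def \<nu>_def mj by (simp add: algebra_simps numeral_2_eq_2)
    next
      case (Suc k)
      fix j assume a: "Suc k+2+j = m+2" "2 \<le> j"
      have ih: "C (k+2) (j+1) (m+2) = (-1)^(k+1) * (\<nu> - of_nat (k+1) * \<mu>)" using Suc.IH[of "j+1"] a by simp
      have r: "C (k+2) (j+1) (k+2+j+1) + C (k+2+1) j (k+2+j+1) = C (k+2) j (k+2+j)"
        using R[of "k+2" j] a bm by simp
      have "C (k+2) j (k+2+j) = (-1)^(k+1) * \<mu>" using x[of k j] a by simp
      moreover have "k+2+j+1 = m+2" using a by simp
      ultimately have "C (k+3) j (m+2) = (-1)^(k+1) * \<mu> - C (k+2) (j+1) (m+2)" using r
        by (simp add: algebra_simps numeral_3_eq_3)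
      then have "C (k+3) j (m+2) = (-1)^(k+1) * \<mu> - (-1)^(k+1) * (\<nu> - of_nat (k+1) * \<mu>)"
        using ih by simp
      then show "C (Suc k+2) j (m+2) = (-1)^(Suc k+1) * (\<nu> - of_nat (Suc k+1) * \<mu>)"
        by (simp add: numeral_3_eq_3 algebra_simps)
    qed
  qed
  obtain q' where q': "q = Suc q'" using q by (cases q) auto
  have mid: "\<nu> = of_nat q * \<mu>"
  proof -
    have "C (q'+2) (q+1) (m+2) = (-1)^(q'+1) * (\<nu> - of_nat (q'+1) * \<mu>)"
      using y[of q' "q+1"] q' unfolding m_def by simp
    moreover have "C (q'+2) (q+1) (m+2) = 0" using diag[of "q+1" "m+2"] q' bm m_def by simp
    ultimately show ?thesis using q' by simp
  qed
  have mu0: "\<mu> = 0"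
  proof (cases "q = 1")
    case True then show ?thesis unfolding \<mu>_def m_def lam_def by simp
  next
    case False
    then have q2: "2 \<le> q" using q by simp
    obtain c where c: "m = c + 1" using m2 by (cases m) auto
    have c3: "3 \<le> c" using q2 c unfolding m_def by simp
    have J: "C 2 c (c+2) * C (c+2) 1 (c+3) + C c 1 (c+1) * C (c+1) 2 (c+3) + C 1 2 3 * C 3 c (c+3) = 0"
      using J1[of c] c3 c bm by simp
    have e1: "C 2 c (c+2) = - \<mu>" using x[of 0 c] c c3 by (simp add: numeral_2_eq_2)
    have e2: "C (c+2) 1 (c+3) = - (lam + \<nu>)" using anti[of "c+2" 1 "c+3"] c bm unfolding \<nu>_def
      by (simp add: numeral_3_eq_3)
    have e3: "C c 1 (c+1) = - lam" using anti[of c 1 "c+1"] Hm[of 1 c] c c3 bm by (simp add: hv_def)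
    have e4: "C (c+1) 2 (c+3) = - (\<mu> - \<nu>)" using anti[of "c+1" 2 "c+3"] y[of 0 "c+1"] c c3 bm
      by (simp add: numeral_3_eq_3 numeral_2_eq_2)
    have e5: "C 3 c (c+3) = \<nu> - 2 * \<mu>" using y[of 1 c] c c3 by (simp add: numeral_3_eq_3 numeral_2_eq_2)
    have "\<mu> * \<nu> = 0" using J unfolding e1 e2 e3 e4 e5 lam_def[symmetric]
      by (simp add: algebra_simps)
    then have "of_nat q * (\<mu> * \<mu>) = 0" using mid by (simp add: algebra_simps)
    then show ?thesis using q by simp
  qed
  have nu0: "\<nu> = 0" using mid mu0 by simp
  show ?thesis unfolding HH_def
  proof (intro allI impI)
    fix i j assume ij: "1 \<le> i" "1 \<le> j" "i + j \<le> 2*q+2"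
    consider "i + j \<le> m" | "i + j = m+1" | "i + j = m+2" using ij unfolding m_def by linarith
    then show "C i j (i+j) = hv i j"
    proof cases
      case 1 then show ?thesis using Hm ij by blast
    next
      case 2
      consider "i = 1" | "j = 1" | "2 \<le> i \<and> 2 \<le> j" using ij by linarith
      then show ?thesis
      proof cases
        case 1 then show ?thesis using 2 mu0 m2 unfolding \<mu>_def by (simp add: hv_def)
      next
        case 3
        obtain k where k: "i = k+2" using 3 by (metis add.commute le_Suc_ex)
        then show ?thesis using x[of k j] 2 3 mu0 by (simp add: hv_def)
      next
        case j: 2
        then have "i = m" using 2 by simp
        have "C 1 m (m+1) = lam" using mu0 unfolding \<mu>_def by simp
        moreover have "C m 1 (m+1) = - C 1 m (m+1)" using anti[of m 1 "m+1"] bm by simp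
        moreover have "hv m 1 = - lam" using m2 by (simp add: hv_def)
        moreover have "C i j (i+j) = C m 1 (m+1)" "hv i j = hv m 1"
          using \<open>i = m\<close> j by simp_all
        ultimately show ?thesis by simp
      qed
    next
      case 3
      consider "i = 1" | "j = 1" | "2 \<le> i \<and> 2 \<le> j" using ij by linarith
      then show ?thesis
      proof cases
        case 1 then show ?thesis using 3 nu0 m2 unfolding \<nu>_def by (simp add: hv_def)
      next
        case c3: 3
        obtain k where k: "i = k+2" using c3 by (metis add.commute le_Suc_ex)
        then show ?thesis using y[of k j] 3 c3 mu0 nu0 by (simp add: hv_def)
      next
        case j: 2
        then have "i = m+1" using 3 by simp
        have "C 1 (m+1) (m+2) = lam" using nu0 unfolding \<nu>_def by simp
        moreover have "C (m+1) 1 (m+2) = - C 1 (m+1) (m+2)" using anti[of "m+1" 1 "m+2"] bm by simp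
        moreover have "hv (m+1) 1 = - lam" using m2 by (simp add: hv_def)
        moreover have "C i j (i+j) = C (m+1) 1 (m+2)" "hv i j = hv (m+1) 1"
          using \<open>i = m+1\<close> j by simp_all
        ultimately show ?thesis by simp
      qed
    qed
  qed
qed

lemma Hall: "1 \<le> q \<Longrightarrow> 2*q \<le> 2*p \<Longrightarrow> HH (2*q)"
proof (induction q)
  case 0 then show ?case by simp
next
  case (Suc q)
  show ?case
  proof (cases "q = 0")
    case True
    have "C 1 1 2 = 0" using diag[of 1 2] p1 by simp
    show ?thesis unfolding HH_def
    proof (intro allI impI)
      fix i j assume "1 \<le> i" "1 \<le> j" "i + j \<le> 2*Suc q"
      then have "i = 1" "j = 1" using True by auto
      then show "C i j (i+j) = hv i j" using \<open>C 1 1 2 = 0\<close> by (simp add: hv_def numeral_2_eq_2)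
    qed
  next
    case False
    then have "HH (2*q)" using Suc by simp
    then have "HH (2*q+2)" using step[of q] False Suc.prems by simp
    then show ?thesis by simp
  qed
qed

lemma HHD: "HH m \<Longrightarrow> 1 \<le> i \<Longrightarrow> 1 \<le> j \<Longrightarrow> i+j \<le> m \<Longrightarrow> C i j (i+j) = hv i j"
  unfolding HH_def by blast

lemma top0: "1 \<le> i \<Longrightarrow> 1 \<le> j \<Longrightarrow> i+j \<le> 2*p \<Longrightarrow> C i j (i+j) = 0"
proof -
  assume h: "1 \<le> i" "1 \<le> j" "i+j \<le> 2*p"
  have H: "HH (2*p)" using Hall[of p] p1 by simp
  show ?thesis
  proof (cases "i = 1 \<and> j = 1")
    case True then show ?thesis using diag[of 1 2] h by (simp add: numeral_2_eq_2)
  next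
    case False
    then have p2: "2 \<le> p" using h by arith
    have "C 1 (2*p-1) (1 + (2*p-1)) = hv 1 (2*p-1)" by (rule HHD[OF H]) (use p2 in auto)
    moreover have "C 1 (2*p-1) (1 + (2*p-1)) = 0" using c1top[of "1 + (2*p-1)"] p2 by simp
    moreover have "2 \<le> 2*p-1" using p2 by simp
    ultimately have "lam = 0" by (simp add: hv_def)
    then have "hv i j = 0" by (simp add: hv_def)
    then show ?thesis using H h unfolding HH_def by simp
  qed
qed

lemma K1: "1 \<le> a \<Longrightarrow> 1 \<le> b \<Longrightarrow> a+b = 2*p \<Longrightarrow> C a b (2*p) = 0"
  using top0[of a b] by simp

lemma K2: "1 \<le> a \<Longrightarrow> 1 \<le> b \<Longrightarrow> a+b+1 = 2*p \<Longrightarrow> C a b (a+b) = 0"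
  using top0[of a b] by simp

lemma d_anti: "a \<le> 2*p \<Longrightarrow> b \<le> 2*p \<Longrightarrow> d_form (2*p) C \<omega> a b = - d_form (2*p) C \<omega> b a"
proof -
  assume h: "a \<le> 2*p" "b \<le> 2*p"
  have "(\<Sum>k\<le>2*p. C a b k * \<omega> k) = (\<Sum>k\<le>2*p. - (C b a k * \<omega> k))"
    by (intro sum.cong refl) (use anti[of a b] h in auto)
  then show ?thesis unfolding d_form_def by (simp add: sum_negf)
qed

lemma d_big: "1 \<le> a \<Longrightarrow> 1 \<le> b \<Longrightarrow> a \<le> 2*p \<Longrightarrow> b \<le> 2*p \<Longrightarrow> 2*p \<le> a+b \<Longrightarrow> d_form (2*p) C \<omega> a b = 0"
proof -
  assume h: "1 \<le> a" "1 \<le> b" "a \<le> 2*p" "b \<le> 2*p" "2*p \<le> a+b"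
  have "\<And>k. k \<in> {..2*p} \<Longrightarrow> C a b k * \<omega> k = 0"
  proof -
    fix k assume k: "k \<in> {..2*p}"
    show "C a b k * \<omega> k = 0"
    proof (cases "k < a+b")
      case True then show ?thesis using low[of a b k] h k by simp
    next
      case False then have "k = 2*p" "a+b = 2*p" using h k by auto
      then show ?thesis using K1[of a b] h by simp
    qed
  qed
  then have "(\<Sum>k\<le>2*p. C a b k * \<omega> k) = 0" by (intro sum.neutral) blast
  then show ?thesis unfolding d_form_def by simp
qed

lemma d_0: "1 \<le> b \<Longrightarrow> b \<le> 2*p-1 \<Longrightarrow> d_form (2*p) C \<omega> 0 b = - \<omega> (b+1)"
proof -
  assume h: "1 \<le> b" "b \<le> 2*p-1"
  have "(\<Sum>k\<le>2*p. C 0 b k * \<omega> k) = C 0 b (b+1) * \<omega> (b+1)"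
    by (rule sum_single) (use h c0[of b] in auto)
  then show ?thesis using c0[of b "b+1"] h unfolding d_form_def by simp
qed

lemma d_0n: "d_form (2*p) C \<omega> 0 (2*p) = 0"
  unfolding d_form_def using c0n by simp

lemma d_00: "d_form (2*p) C \<omega> 0 0 = 0"
  unfolding d_form_def using diag[of 0] by simp

lemma d_nz: "a \<le> 2*p \<Longrightarrow> b \<le> 2*p \<Longrightarrow> d_form (2*p) C \<omega> a b \<noteq> 0 \<Longrightarrow> a + b + 1 \<le> 2*p"
proof -
  assume h: "a \<le> 2*p" "b \<le> 2*p" "d_form (2*p) C \<omega> a b \<noteq> 0"
  consider "a = 0" | "b = 0" | "1 \<le> a \<and> 1 \<le> b" by linarith
  then show ?thesis
  proof cases
    case 1 then show ?thesis using h d_0n d_00 by (cases "b = 0 \<or> b = 2*p") auto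
  next
    case 2
    then have "d_form (2*p) C \<omega> 0 a \<noteq> 0" using h d_anti[of a b \<omega>] by simp
    then show ?thesis using 2 h d_0n d_00 by (cases "a = 0 \<or> a = 2*p") auto
  next
    case 3 then show ?thesis using h d_big[of a b \<omega>] by linarith
  qed
qed

lemma d_ad: "a \<le> 2*p \<Longrightarrow> b \<le> 2*p \<Longrightarrow> a+b+1 = 2*p \<Longrightarrow> d_form (2*p) C \<omega> a b = - C a b (2*p) * \<omega> (2*p)"
proof -
  assume h: "a \<le> 2*p" "b \<le> 2*p" "a+b+1 = 2*p"
  have z: "\<And>k. k \<le> 2*p \<Longrightarrow> k \<noteq> 2*p \<Longrightarrow> C a b k = 0"
  proof -
    fix k assume k: "k \<le> 2*p" "k \<noteq> 2*p"
    consider "a = 0" | "b = 0" | "1 \<le> a \<and> 1 \<le> b" by linarith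
    then show "C a b k = 0"
    proof cases
      case 1 then show ?thesis using c0[of b k] h k p1 by auto
    next
      case 2 then show ?thesis using c0[of a k] anti[of a b k] h k p1 by auto
    next
      case 3
      show ?thesis
      proof (cases "k < a+b")
        case True then show ?thesis using low[of a b k] 3 h k by simp
      next
        case False then have "k = a+b" using h k by simp
        then show ?thesis using K2[of a b] 3 h by simp
      qed
    qed
  qed
  have "(\<Sum>k\<le>2*p. C a b k * \<omega> k) = C a b (2*p) * \<omega> (2*p)"
    by (rule sum_single) (use z in auto)
  then show ?thesis unfolding d_form_def by simp
qed

definition tm :: "(nat \<Rightarrow> 'k) \<Rightarrow> (nat \<Rightarrow> nat) \<Rightarrow> 'k" where
  "tm \<omega> \<sigma> = of_int (sign \<sigma>) * \<omega> (\<sigma> 0) * (\<Prod>i<p. d_form (2*p) C \<omega> (\<sigma> (2*i+1)) (\<sigma> (2*i+2)))"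

lemma cv: "contact_value p C \<omega> = (\<Sum>\<sigma>\<in>{\<sigma>. \<sigma> permutes {0..2*p}}. tm \<omega> \<sigma>)"
  unfolding contact_value_def tm_def by simp

definition SS where
  "SS = {\<sigma>. \<sigma> permutes {0..2*p} \<and> \<sigma> 0 = 2*p \<and> (\<forall>i<p. \<sigma> (2*i+1) + \<sigma> (2*i+2) + 1 = 2*p)}"

lemma sum_pairs: "(\<Sum>j\<le>2*n. f j) = f 0 + (\<Sum>i<n. f (2*i+1) + f (2*i+2))"
  for f :: "nat \<Rightarrow> 'a::comm_monoid_add"
proof (induction n)
  case 0 then show ?case by simp
next
  case (Suc n)
  have "2 * Suc n = Suc (Suc (2*n))" by simp
  then have "(\<Sum>j\<le>2*Suc n. f j) = (\<Sum>j\<le>2*n. f j) + f (2*n+1) + f (2*n+2)"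
    by (simp add: sum.atMost_Suc)
  then show ?case using Suc by (simp add: ac_simps)
qed

lemma sum_odd: "(\<Sum>i<n. (2*i+1) + (2*i+2::nat)) = n*(2*n+1)"
  by (induction n) (simp_all add: algebra_simps)

lemma rep: "x \<le> 2*p \<Longrightarrow> x = 0 \<or> (\<exists>i<p. x = 2*i+1) \<or> (\<exists>i<p. x = 2*i+2)"
  by presburger

lemma perm_img: "\<sigma> permutes {0..2*p} \<Longrightarrow> x \<le> 2*p \<Longrightarrow> \<sigma> x \<le> 2*p"
  using permutes_in_image[of \<sigma> "{0..2*p}" x] by auto

lemma T1: assumes \<sigma>: "\<sigma> permutes {0..2*p}" and nz: "tm \<omega> \<sigma> \<noteq> 0" shows "\<sigma> \<in> SS"
proof -
  have fac: "d_form (2*p) C \<omega> (\<sigma> (2*i+1)) (\<sigma> (2*i+2)) \<noteq> 0" if "i < p" for i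
  proof
    assume "d_form (2*p) C \<omega> (\<sigma> (2*i+1)) (\<sigma> (2*i+2)) = 0"
    then have "(\<Prod>i<p. d_form (2*p) C \<omega> (\<sigma> (2*i+1)) (\<sigma> (2*i+2))) = 0"
      using that by (intro prod_zero) auto
    then show False using nz unfolding tm_def by simp
  qed
  have pb: "\<sigma> (2*i+1) + \<sigma> (2*i+2) \<le> 2*p - 1" if "i < p" for i
    using d_nz[OF perm_img[OF \<sigma>] perm_img[OF \<sigma>] fac[OF that]] that by simp
  have s0: "\<sigma> 0 \<le> 2*p" using perm_img[OF \<sigma>] by simp
  have "(\<Sum>j\<in>{0..2*p}. j) = (\<Sum>j\<in>{0..2*p}. \<sigma> j)"
    using sum.permute[OF \<sigma>, of "\<lambda>j. j"] by (simp add: comp_def)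
  then have "(\<Sum>j\<le>2*p. j) = (\<Sum>j\<le>2*p. \<sigma> j)" by (simp add: atLeast0AtMost)
  then have tot: "\<sigma> 0 + (\<Sum>i<p. \<sigma> (2*i+1) + \<sigma> (2*i+2)) = p*(2*p+1)"
    using sum_pairs[of "\<lambda>j. j" p] sum_pairs[of \<sigma> p] sum_odd[of p] by simp
  have ar: "p*(2*p-1) + 2*p = p*(2*p+1)"
  proof -
    obtain q where "p = Suc q" using p1 by (cases p) auto
    then show ?thesis by (simp add: algebra_simps)
  qed
  have le: "(\<Sum>i<p. \<sigma> (2*i+1) + \<sigma> (2*i+2)) \<le> (\<Sum>i<p. 2*p-1)"
    by (rule sum_mono) (use pb in auto)
  have e0: "\<sigma> 0 = 2*p"
  proof (rule ccontr)
    assume "\<sigma> 0 \<noteq> 2*p"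
    then have "\<sigma> 0 < 2*p" using s0 by simp
    then show False using tot le ar by simp
  qed
  have ep: "\<sigma> (2*i+1) + \<sigma> (2*i+2) + 1 = 2*p" if i: "i < p" for i
  proof (rule ccontr)
    assume "\<sigma> (2*i+1) + \<sigma> (2*i+2) + 1 \<noteq> 2*p"
    then have "\<sigma> (2*i+1) + \<sigma> (2*i+2) < 2*p-1" using pb[OF i] p1 by arith
    then have "(\<Sum>i<p. \<sigma> (2*i+1) + \<sigma> (2*i+2)) < (\<Sum>i<p. 2*p-1)"
      by (intro sum_strict_mono_ex1) (use pb i in auto)
    then show False using tot s0 ar by simp
  qed
  show ?thesis unfolding SS_def using \<sigma> e0 ep by simp
qed

lemma SS_img: "\<sigma> \<in> SS \<Longrightarrow> x \<le> 2*p \<Longrightarrow> \<sigma> x \<le> 2*p"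
  unfolding SS_def using perm_img by blast

lemma T2: assumes "\<sigma> \<in> SS"
  shows "tm \<omega> \<sigma> = of_int (sign \<sigma>) * \<omega> (2*p) * (\<Prod>i<p. - C (\<sigma> (2*i+1)) (\<sigma> (2*i+2)) (2*p) * \<omega> (2*p))"
proof -
  have "(\<Prod>i<p. d_form (2*p) C \<omega> (\<sigma> (2*i+1)) (\<sigma> (2*i+2))) =
        (\<Prod>i<p. - C (\<sigma> (2*i+1)) (\<sigma> (2*i+2)) (2*p) * \<omega> (2*p))"
  proof (rule prod.cong)
    fix i assume "i \<in> {..<p}"
    then show "d_form (2*p) C \<omega> (\<sigma> (2*i+1)) (\<sigma> (2*i+2)) = - C (\<sigma> (2*i+1)) (\<sigma> (2*i+2)) (2*p) * \<omega> (2*p)"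
      using assms d_ad SS_img[OF assms] unfolding SS_def by simp
  qed simp
  then show ?thesis using assms unfolding tm_def SS_def by simp
qed

lemma T3: assumes x: "1 \<le> x" "x + 1 \<le> p" and z: "C x (2*p-1-x) (2*p) = 0" and \<sigma>: "\<sigma> \<in> SS"
  shows "tm \<omega> \<sigma> = 0"
proof -
  have sp: "\<sigma> permutes {0..2*p}" and s0: "\<sigma> 0 = 2*p" and ps: "\<And>i. i<p \<Longrightarrow> \<sigma> (2*i+1) + \<sigma> (2*i+2) + 1 = 2*p"
    using \<sigma> unfolding SS_def by auto
  define j where "j = inv \<sigma> x"
  have sj: "\<sigma> j = x" unfolding j_def using permutes_inverses(1)[OF sp] by simp
  have jle: "j \<le> 2*p" unfolding j_def using permutes_in_image[OF permutes_inv[OF sp], of x] x by auto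
  have j0: "j \<noteq> 0"
  proof
    assume "j = 0" then have "x = 2*p" using sj s0 by simp
    then show False using x by simp
  qed
  obtain i where i: "i < p" "j = 2*i+1 \<or> j = 2*i+2" using rep[OF jle] j0 by auto
  have "C (\<sigma> (2*i+1)) (\<sigma> (2*i+2)) (2*p) = 0"
  proof (cases "j = 2*i+1")
    case True
    then have "\<sigma> (2*i+2) = 2*p-1-x" using ps[OF i(1)] sj by simp
    then show ?thesis using True sj z by simp
  next
    case False
    then have jj: "j = 2*i+2" using i by simp
    then have "\<sigma> (2*i+1) = 2*p-1-x" using ps[OF i(1)] sj by simp
    then show ?thesis using jj sj z anti[of "2*p-1-x" x "2*p"] x by simp
  qed
  then have "(\<Prod>i<p. - C (\<sigma> (2*i+1)) (\<sigma> (2*i+2)) (2*p) * \<omega> (2*p)) = 0"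
    using i(1) by (intro prod_zero) auto
  then show ?thesis using T2[OF \<sigma>] by simp
qed

lemma par: "2*a+1 \<noteq> (2*b+2::nat)" "2*b+2 \<noteq> (2*a+1::nat)" "(2*a+1 = (2*b+1::nat)) = (a = b)"
  "(2*a+2 = (2*b+2::nat)) = (a = b)" "2*a+1 \<noteq> (0::nat)" "2*a+2 \<noteq> (0::nat)"
  by presburger+

definition G where "G \<sigma> = of_int (sign \<sigma>) * (\<Prod>i<p. - C (\<sigma> (2*i+1)) (\<sigma> (2*i+2)) (2*p))"

definition sst :: "nat \<Rightarrow> nat" where
  "sst x = (if x = 0 then 2*p else if x \<le> 2*p then (if odd x then (x-1) div 2 else 2*p - 1 - (x-2) div 2) else x)"

lemma sst_odd: "i < p \<Longrightarrow> sst (2*i+1) = i" unfolding sst_def by simp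
lemma sst_even: "i < p \<Longrightarrow> sst (2*i+2) = 2*p-1-i" unfolding sst_def by simp
lemma sst_0: "sst 0 = 2*p" unfolding sst_def by simp
lemma sst_odd': "i < p \<Longrightarrow> sst (Suc (2*i)) = i" using sst_odd by simp
lemma sst_even': "i < p \<Longrightarrow> sst (Suc (Suc (2*i))) = 2*p-1-i" using sst_even by simp

lemma sst_perm: "sst permutes {0..2*p}"
proof (rule bij_imp_permutes)
  have inj: "inj_on sst {0..2*p}"
  proof (rule inj_onI)
    fix x y assume xy: "x \<in> {0..2*p}" "y \<in> {0..2*p}" "sst x = sst y"
    show "x = y"
      using rep[of x] rep[of y] xy by (auto simp: sst_odd sst_even sst_0 sst_odd' sst_even')
  qed
  have sub: "sst ` {0..2*p} \<subseteq> {0..2*p}"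
  proof
    fix y assume "y \<in> sst ` {0..2*p}"
    then obtain x where x: "x \<le> 2*p" "y = sst x" by auto
    then show "y \<in> {0..2*p}" using rep[of x] by (auto simp: sst_odd sst_even sst_0 sst_odd' sst_even')
  qed
  have "sst ` {0..2*p} = {0..2*p}" using endo_inj_surj[OF _ sub inj] by simp
  then show "bij_betw sst {0..2*p} {0..2*p}" using inj unfolding bij_betw_def by simp
next
  fix x assume "x \<notin> {0..2*p}" then show "sst x = x" unfolding sst_def by auto
qed

lemma sst_SS: "sst \<in> SS"
  unfolding SS_def using sst_perm p1 by (auto simp: sst_odd sst_even sst_0 sst_odd' sst_even')

lemma SS_perm: "\<sigma> \<in> SS \<Longrightarrow> permutation \<sigma>"
  unfolding SS_def permutation_permutes by blast

lemma SS_D: assumes "\<sigma> \<in> SS"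
  shows "\<sigma> permutes {0..2*p}" "\<sigma> 0 = 2*p" "\<And>i. i<p \<Longrightarrow> \<sigma> (2*i+1) + \<sigma> (2*i+2) + 1 = 2*p"
  using assms unfolding SS_def by auto

lemma swA:
  assumes \<sigma>: "\<sigma> \<in> SS" and i: "i < p"
  shows "\<sigma> \<circ> transpose (2*i+1) (2*i+2) \<in> SS" "G (\<sigma> \<circ> transpose (2*i+1) (2*i+2)) = G \<sigma>"
proof -
  define \<tau> where "\<tau> = transpose (2*i+1) (2*i+2)"
  have tp: "\<tau> permutes {0..2*p}" unfolding \<tau>_def using i by (intro permutes_swap_id) auto
  have v: "\<And>i'. i' \<noteq> i \<Longrightarrow> \<tau> (2*i'+1) = 2*i'+1" "\<And>i'. i' \<noteq> i \<Longrightarrow> \<tau> (2*i'+2) = 2*i'+2"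
    "\<tau> (2*i+1) = 2*i+2" "\<tau> (2*i+2) = 2*i+1" "\<tau> 0 = 0"
    unfolding \<tau>_def by (auto simp: transpose_def par)
  show "\<sigma> \<circ> \<tau> \<in> SS" unfolding SS_def
  proof (intro CollectI conjI allI impI)
    show "\<sigma> \<circ> \<tau> permutes {0..2*p}" using permutes_compose[OF tp SS_D(1)[OF \<sigma>]] .
    show "(\<sigma> \<circ> \<tau>) 0 = 2*p" using v SS_D(2)[OF \<sigma>] by simp
    fix i' assume "i' < p"
    then show "(\<sigma> \<circ> \<tau>) (2*i'+1) + (\<sigma> \<circ> \<tau>) (2*i'+2) + 1 = 2*p"
      using v SS_D(3)[OF \<sigma>, of i'] SS_D(3)[OF \<sigma> i] by (cases "i' = i") auto
  qed
  have sg: "sign (\<sigma> \<circ> \<tau>) = - sign \<sigma>"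
    using sign_compose[OF SS_perm[OF \<sigma>] permutation_swap_id[of "2*i+1" "2*i+2"]]
    unfolding \<tau>_def by (simp add: sign_swap_id)
  define h where "h i' = - C (\<sigma> (2*i'+1)) (\<sigma> (2*i'+2)) (2*p)" for i'
  define h' where "h' i' = - C ((\<sigma>\<circ>\<tau>) (2*i'+1)) ((\<sigma>\<circ>\<tau>) (2*i'+2)) (2*p)" for i'
  have hi: "h' i = - h i" unfolding h_def h'_def using v anti[of "\<sigma> (2*i+2)" "\<sigma> (2*i+1)" "2*p"]
      SS_img[OF \<sigma>, of "2*i+1"] SS_img[OF \<sigma>, of "2*i+2"] i by simp
  have ho: "\<And>i'. i' \<in> {..<p} - {i} \<Longrightarrow> h' i' = h i'" unfolding h_def h'_def using v by simp
  have "prod h' {..<p} = h' i * prod h' ({..<p} - {i})" using i by (intro prod.remove) auto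
  also have "\<dots> = - h i * prod h ({..<p} - {i})"
  proof -
    have "prod h' ({..<p} - {i}) = prod h ({..<p} - {i})" by (rule prod.cong) (use ho in auto)
    then show ?thesis using hi by simp
  qed
  also have "\<dots> = - prod h {..<p}" using prod.remove[of "{..<p}" i h] i by simp
  finally have "prod h' {..<p} = - prod h {..<p}" .
  moreover have "G (\<sigma> \<circ> \<tau>) = of_int (sign (\<sigma> \<circ> \<tau>)) * prod h' {..<p}" unfolding G_def h'_def ..
  moreover have "G \<sigma> = of_int (sign \<sigma>) * prod h {..<p}" unfolding G_def h_def ..
  ultimately show "G (\<sigma> \<circ> \<tau>) = G \<sigma>" using sg by simp
qed

lemma swB:
  assumes \<sigma>: "\<sigma> \<in> SS" and i: "i < p" and k: "k < p" and ik: "i \<noteq> k"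
  shows "\<sigma> \<circ> (transpose (2*i+1) (2*k+1) \<circ> transpose (2*i+2) (2*k+2)) \<in> SS"
    "G (\<sigma> \<circ> (transpose (2*i+1) (2*k+1) \<circ> transpose (2*i+2) (2*k+2))) = G \<sigma>"
    "\<And>i'. (\<sigma> \<circ> (transpose (2*i+1) (2*k+1) \<circ> transpose (2*i+2) (2*k+2))) (2*i'+1) = \<sigma> (2 * transpose i k i' + 1)"
    "\<And>i'. (\<sigma> \<circ> (transpose (2*i+1) (2*k+1) \<circ> transpose (2*i+2) (2*k+2))) (2*i'+2) = \<sigma> (2 * transpose i k i' + 2)"
proof -
  define \<tau> where "\<tau> = transpose (2*i+1) (2*k+1) \<circ> transpose (2*i+2) (2*k+2)"
  have tp: "\<tau> permutes {0..2*p}" unfolding \<tau>_def using i k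
    by (intro permutes_compose permutes_swap_id) auto
  have v1: "\<tau> (2*i'+1) = 2 * transpose i k i' + 1" for i'
    unfolding \<tau>_def by (auto simp: transpose_def par)
  have v2: "\<tau> (2*i'+2) = 2 * transpose i k i' + 2" for i'
    unfolding \<tau>_def by (auto simp: transpose_def par)
  have v0: "\<tau> 0 = 0" unfolding \<tau>_def by (auto simp: transpose_def par)
  show "\<And>i'. (\<sigma> \<circ> \<tau>) (2*i'+1) = \<sigma> (2 * transpose i k i' + 1)" using v1 by simp
  show "\<And>i'. (\<sigma> \<circ> \<tau>) (2*i'+2) = \<sigma> (2 * transpose i k i' + 2)" using v2 by simp
  have tk: "\<And>i'. i' < p \<Longrightarrow> transpose i k i' < p" using i k by (auto simp: transpose_def)
  show "\<sigma> \<circ> \<tau> \<in> SS" unfolding SS_def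
  proof (intro CollectI conjI allI impI)
    show "\<sigma> \<circ> \<tau> permutes {0..2*p}" using permutes_compose[OF tp SS_D(1)[OF \<sigma>]] .
    show "(\<sigma> \<circ> \<tau>) 0 = 2*p" using v0 SS_D(2)[OF \<sigma>] by simp
    fix i' assume "i' < p"
    then show "(\<sigma> \<circ> \<tau>) (2*i'+1) + (\<sigma> \<circ> \<tau>) (2*i'+2) + 1 = 2*p"
      using v1 v2 SS_D(3)[OF \<sigma> tk] by simp
  qed
  have "sign \<tau> = 1"
    unfolding \<tau>_def using ik
    by (simp add: sign_compose permutation_swap_id sign_swap_id par)
  then have sg: "sign (\<sigma> \<circ> \<tau>) = sign \<sigma>"
    using sign_compose[OF SS_perm[OF \<sigma>], of \<tau>] tp permutation_permutes by (metis finite_atLeastAtMost mult.right_neutral)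
  define h where "h i' = - C (\<sigma> (2*i'+1)) (\<sigma> (2*i'+2)) (2*p)" for i'
  have "(\<Prod>i'<p. - C ((\<sigma>\<circ>\<tau>) (2*i'+1)) ((\<sigma>\<circ>\<tau>) (2*i'+2)) (2*p)) = prod (h \<circ> transpose i k) {..<p}"
    unfolding h_def using v1 v2 by (intro prod.cong) auto
  also have "\<dots> = prod h {..<p}"
    using prod.permute[of "transpose i k" "{..<p}" h] i k by (simp add: permutes_swap_id)
  finally show "G (\<sigma> \<circ> \<tau>) = G \<sigma>" unfolding G_def h_def using sg by simp
qed

definition w where "w \<sigma> i = (if \<sigma> (2*i+1) = i then 0 else if \<sigma> (2*i+2) = i then 1 else (2::nat))"
definition meas where "meas \<sigma> = (\<Sum>i<p. w \<sigma> i)"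

lemma const: "\<sigma> \<in> SS \<Longrightarrow> G \<sigma> = G sst"
proof (induction "meas \<sigma>" arbitrary: \<sigma> rule: less_induct)
  case less
  note \<sigma> = less.prems
  have sp: "\<sigma> permutes {0..2*p}" and s0: "\<sigma> 0 = 2*p"
    and ps: "\<And>i. i<p \<Longrightarrow> \<sigma> (2*i+1) + \<sigma> (2*i+2) + 1 = 2*p" using SS_D[OF \<sigma>] by auto
  show ?case
  proof (cases "\<forall>i<p. \<sigma> (2*i+1) = i")
    case True
    have "\<sigma> = sst"
    proof
      fix x
      show "\<sigma> x = sst x"
      proof (cases "x \<le> 2*p")
        case xl: True
        consider "x = 0" | i where "i < p" "x = 2*i+1" | i where "i < p" "x = 2*i+2"
          using rep[OF xl] by blast
        then show ?thesis
        proof cases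
          case 1 then show ?thesis using s0 sst_0 by simp
        next
          case 2 then show ?thesis using True sst_odd by simp
        next
          case 3
          have "\<sigma> (2*i+1) = i" using True 3 by simp
          then have "\<sigma> (2*i+2) = 2*p-1-i" using ps[OF 3(1)] by simp
          then show ?thesis using 3 sst_even by simp
        qed
      next
        case False
        then have "x \<notin> {0..2*p}" by simp
        then show ?thesis using permutes_not_in[OF sp] False unfolding sst_def by simp
      qed
    qed
    then show ?thesis by simp
  next
    case False
    then obtain i where i: "i < p" "\<sigma> (2*i+1) \<noteq> i" by auto
    show ?thesis
    proof (cases "\<sigma> (2*i+2) = i")
      case True
      define \<sigma>' where "\<sigma>' = \<sigma> \<circ> transpose (2*i+1) (2*i+2)"
      have in': "\<sigma>' \<in> SS" "G \<sigma>' = G \<sigma>" using swA[OF \<sigma> i(1)] unfolding \<sigma>'_def by auto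
      have vals: "\<And>i'. i' \<noteq> i \<Longrightarrow> \<sigma>' (2*i'+1) = \<sigma> (2*i'+1)" "\<And>i'. i' \<noteq> i \<Longrightarrow> \<sigma>' (2*i'+2) = \<sigma> (2*i'+2)"
        "\<sigma>' (2*i+1) = \<sigma> (2*i+2)" "\<sigma>' (2*i+2) = \<sigma> (2*i+1)"
        unfolding \<sigma>'_def by (auto simp: transpose_def par)
      have "meas \<sigma>' < meas \<sigma>" unfolding meas_def
      proof (rule sum_strict_mono_ex1)
        show "\<forall>x\<in>{..<p}. w \<sigma>' x \<le> w \<sigma> x"
        proof
          fix x assume "x \<in> {..<p}"
          show "w \<sigma>' x \<le> w \<sigma> x"
          proof (cases "x = i")
            case True then show ?thesis using vals(3) \<open>\<sigma> (2*i+2) = i\<close> by (simp add: w_def)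
          next
            case False then show ?thesis using vals(1)[OF False] vals(2)[OF False] by (simp add: w_def)
          qed
        qed
        show "\<exists>a\<in>{..<p}. w \<sigma>' a < w \<sigma> a"
          using i vals(3) \<open>\<sigma> (2*i+2) = i\<close> by (intro bexI[of _ i]) (auto simp: w_def)
      qed simp
      then have "G \<sigma>' = G sst" using less.hyps in'(1) by blast
      then show ?thesis using in'(2) by simp
    next
      case False
      define j0 where "j0 = inv \<sigma> i"
      have sj: "\<sigma> j0 = i" unfolding j0_def using permutes_inverses(1)[OF sp] by simp
      have jle: "j0 \<le> 2*p" unfolding j0_def using permutes_in_image[OF permutes_inv[OF sp], of i] i by auto
      have j0: "j0 \<noteq> 0"
      proof
        assume "j0 = 0" then have "i = 2*p" using sj s0 by simp
        then show False using i by simp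
      qed
      obtain k where k: "k < p" "j0 = 2*k+1 \<or> j0 = 2*k+2" using rep[OF jle] j0 by auto
      have ik: "i \<noteq> k" using k sj i(2) False by auto
      have slotk: "\<sigma> (2*k+1) = i \<or> \<sigma> (2*k+2) = i" using k sj by auto
      have wk: "\<sigma> (2*k+1) \<noteq> k \<and> \<sigma> (2*k+2) \<noteq> k"
        using slotk ps[OF k(1)] ik i(1) k(1) by auto
      define \<sigma>' where "\<sigma>' = \<sigma> \<circ> (transpose (2*i+1) (2*k+1) \<circ> transpose (2*i+2) (2*k+2))"
      have in': "\<sigma>' \<in> SS" "G \<sigma>' = G \<sigma>" using swB[OF \<sigma> i(1) k(1) ik] unfolding \<sigma>'_def by auto
      have v1: "\<sigma>' (2*x+1) = \<sigma> (2 * transpose i k x + 1)" for x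
        using swB(3)[OF \<sigma> i(1) k(1) ik, of x] unfolding \<sigma>'_def .
      have v2: "\<sigma>' (2*x+2) = \<sigma> (2 * transpose i k x + 2)" for x
        using swB(4)[OF \<sigma> i(1) k(1) ik, of x] unfolding \<sigma>'_def .
      have wi: "w \<sigma>' i \<le> 1" using v1[of i] v2[of i] slotk by (auto simp: w_def)
      have wsi: "w \<sigma> i = 2" using i(2) False by (simp add: w_def)
      have wsk: "w \<sigma> k = 2" using wk by (simp add: w_def)
      have "meas \<sigma>' < meas \<sigma>" unfolding meas_def
      proof (rule sum_strict_mono_ex1)
        show "\<forall>x\<in>{..<p}. w \<sigma>' x \<le> w \<sigma> x"
        proof
          fix x assume "x \<in> {..<p}"
          show "w \<sigma>' x \<le> w \<sigma> x"
          proof (cases "x = i \<or> x = k")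
            case True
            have "w \<sigma>' x \<le> 2" by (simp add: w_def)
            then show ?thesis using True wi wsi wsk by auto
          next
            case False
            then have "transpose i k x = x" by simp
            then show ?thesis using v1[of x] v2[of x] by (simp add: w_def)
          qed
        qed
        show "\<exists>a\<in>{..<p}. w \<sigma>' a < w \<sigma> a" using i(1) wi wsi by (intro bexI[of _ i]) auto
      qed simp
      then have "G \<sigma>' = G sst" using less.hyps in'(1) by blast
      then show ?thesis using in'(2) by simp
    qed
  qed
qed

end

theorem proposition35:
  fixes C :: "nat \<Rightarrow> nat \<Rightarrow> nat \<Rightarrow> 'k::{alg_closed_field, field_char_0}"
    and p :: nat
  assumes "lie_sc (2*p) C"
    and "filiform (2*p) C"
    and "vergne (2*p) C"
  shows "(\<exists>\<omega>::nat \<Rightarrow> 'k. is_contact_form p C \<omega>) \<longleftrightarrow>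
         (\<Prod>i\<in>{1..p-1}. C i (2*p - 1 - i) (2*p)) \<noteq> 0"
proof (cases "p = 0")
  case True
  have perms: "{\<sigma>. \<sigma> permutes {0..2*p}} = {id}" using True by auto
  have cv0: "contact_value p C \<omega> = \<omega> 0" for \<omega> :: "nat \<Rightarrow> 'k"
    unfolding contact_value_def perms using True by simp
  have "is_contact_form p C (\<lambda>_. 1)" unfolding is_contact_form_def cv0 by simp
  then show ?thesis using True by auto
next
  case False
  then have p1: "1 \<le> p" by simp
  interpret vf C p by unfold_locales (use assms p1 in auto)
  show ?thesis
  proof
    assume "\<exists>\<omega>. is_contact_form p C \<omega>"
    then obtain \<omega> where nz: "contact_value p C \<omega> \<noteq> 0" unfolding is_contact_form_def by auto
    show "(\<Prod>i\<in>{1..p-1}. C i (2*p - 1 - i) (2*p)) \<noteq> 0"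
    proof
      assume "(\<Prod>i\<in>{1..p-1}. C i (2*p - 1 - i) (2*p)) = 0"
      then obtain x where x: "x \<in> {1..p-1}" "C x (2*p-1-x) (2*p) = 0" by auto
      have z: "tm \<omega> \<sigma> = 0" if "\<sigma> \<in> {\<sigma>. \<sigma> permutes {0..2*p}}" for \<sigma>
      proof (rule ccontr)
        assume "tm \<omega> \<sigma> \<noteq> 0"
        then have "\<sigma> \<in> SS" using T1 that by blast
        then have "tm \<omega> \<sigma> = 0" using T3[of x \<sigma> \<omega>] x p1 by auto
        then show False using \<open>tm \<omega> \<sigma> \<noteq> 0\<close> by simp
      qed
      have "contact_value p C \<omega> = 0" unfolding cv using z by (intro sum.neutral) blast
      then show False using nz by simp
    qed
  next
    assume P: "(\<Prod>i\<in>{1..p-1}. C i (2*p - 1 - i) (2*p)) \<noteq> 0"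
    define \<omega>0 where "\<omega>0 = (\<lambda>k. if k = 2*p then (1::'k) else 0)"
    have fin: "finite {\<sigma>. \<sigma> permutes {0..2*p}}" by (rule finite_permutations) simp
    have sub: "SS \<subseteq> {\<sigma>. \<sigma> permutes {0..2*p}}" unfolding SS_def by auto
    have finS: "finite SS" using finite_subset[OF sub fin] .
    have tmG: "tm \<omega>0 \<sigma> = G \<sigma>" if "\<sigma> \<in> SS" for \<sigma>
      using T2[OF that, of \<omega>0] unfolding G_def \<omega>0_def by simp
    have "contact_value p C \<omega>0 = (\<Sum>\<sigma>\<in>SS. tm \<omega>0 \<sigma>)" unfolding cv
      by (rule sum.mono_neutral_right[OF fin sub]) (use T1 in blast)
    also have "\<dots> = (\<Sum>\<sigma>\<in>SS. G sst)" using tmG const by (intro sum.cong) auto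
    also have "\<dots> = of_nat (card SS) * G sst" by simp
    finally have cvv: "contact_value p C \<omega>0 = of_nat (card SS) * G sst" .
    have "card SS \<noteq> 0" using finS sst_SS by auto
    then have c1: "(of_nat (card SS) :: 'k) \<noteq> 0" by simp
    have fac: "- C (sst (2*i+1)) (sst (2*i+2)) (2*p) \<noteq> 0" if i: "i < p" for i
    proof (cases "i = 0")
      case True
      have "C 0 (2*p-1) (2*p) = 1" using c0[of "2*p-1" "2*p"] p1 by simp
      then show ?thesis using True sst_odd[of 0] sst_even[of 0] p1 by simp
    next
      case False
      then have "i \<in> {1..p-1}" using i by simp
      then have "C i (2*p-1-i) (2*p) \<noteq> 0" using P by auto
      then show ?thesis using sst_odd[OF i] sst_even[OF i] by simp
    qed
    have "G sst \<noteq> 0" unfolding G_def using fac by auto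
    then have "contact_value p C \<omega>0 \<noteq> 0" using cvv c1 by simp
    then show "\<exists>\<omega>. is_contact_form p C \<omega>" unfolding is_contact_form_def by blast
  qed
qed

end
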